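(* Let $a=\tfrac12$ (equivalently $\sigma=2$), $\tfrac12<b<\tfrac34$, $\tfrac14<d<\tfrac12$, and $\kappa,s\in\mathbb{R}$ with $|\kappa|\le s$. Then there exists $C>0$ such that for all $u\in X^{\kappa,b}$ and $v\in X^{s,b}_a$, $$\|\bar u\, v\|_{X^{\kappa,-d}}\le C\,\|u\|_{X^{\kappa,b}}\,\|v\|_{X^{s,b}_a}.$$
   Context: Notation: $\langle x\rangle=1+|x|$; $\hat f(\xi,\tau)$ is the space-time Fourier transform. For $s,b\in\mathbb{R}$ and $a>0$, $X^{s,b}$ is the completion of $\mathcal{S}(\mathbb{R}^2)$ under $\|f\|_{X^{s,b}}=\|\langle\xi\rangle^s\langle\tau+\xi^2\rangle^b\hat f(\xi,\tau)\|_{L^2_{\xi,\tau}}$, and $X^{s,b}_a$ is the completion under $\|f\|_{X^{s,b}_a}=\|\langle\xi\rangle^s\langle\tau+a\xi^2\rangle^b\hat f(\xi,\tau)\|_{L^2_{\xi,\tau}}$. *)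

theory Defs
  imports "HOL-Analysis.Analysis"
begin

definition jb :: "real \<Rightarrow> real" where
  "jb x = 1 + \<bar>x\<bar>"

(* F is the space-time Fourier
   transform \<hat>f(\<xi>,\<tau>) of f (first component \<xi>, second \<tau>):
   Xsq s b a F = \<parallel><\<xi>>^s <\<tau> + a \<xi>^2>^b F(\<xi>,\<tau>)\<parallel>_{L^2}^2.
   X^{s,b} corresponds to a = 1, X^{s,b}_a to general a. *)
definition Xsq :: "real \<Rightarrow> real \<Rightarrow> real \<Rightarrow> (real \<times> real \<Rightarrow> complex) \<Rightarrow> ennreal" where
  "Xsq s b a F = (\<integral>\<^sup>+ z. ennreal ((jb (fst z) powr s * jb (snd z + a * (fst z)^2) powr b
                                   * cmod (F z))^2) \<partial>lborel)"

(* Fourier transform of  conj(u) * v  in terms of F = \<hat>u, G = \<hat>v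
   (up to the harmless constant (2\<pi>)^(-2)):
   \<hat>(conj u * v)(z) = \<integral> conj(\<hat>u(w - z)) \<hat>v(w) dw. *)
definition conj_prod_hat :: "(real \<times> real \<Rightarrow> complex) \<Rightarrow> (real \<times> real \<Rightarrow> complex) \<Rightarrow> real \<times> real \<Rightarrow> complex" where
  "conj_prod_hat F G = (\<lambda>z. \<integral> w. cnj (F (w - z)) * G w \<partial>lborel)"

end

theory Submission
  imports Defs
begin

lemma jb_ge1: "1 \<le> jb x" by (simp add: jb_def)
lemma jb_pos: "0 < jb x" by (simp add: jb_def)
lemma jb_nn: "0 \<le> jb x" by (simp add: jb_def)

lemma jb_meas[measurable]: "jb \<in> borel_measurable borel"
  unfolding jb_def by measurable

lemma jb_sub: "jb (x + y) \<le> jb x * jb y"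
  by (simp add: jb_def algebra_simps abs_triangle_ineq[THEN order_trans])

lemma weight:
  assumes "\<bar>k\<bar> \<le> s"
  shows "jb x powr k \<le> jb (y - x) powr k * jb y powr s"
proof (cases "0 \<le> k")
  case True
  have "jb x \<le> jb (x - y) * jb y" using jb_sub[of "x - y" y] by simp
  also have "jb (x - y) = jb (y - x)" by (simp add: jb_def abs_minus_commute)
  finally have "jb x powr k \<le> (jb (y - x) * jb y) powr k"
    using True jb_nn[of x] by (intro powr_mono2) auto
  also have "\<dots> = jb (y - x) powr k * jb y powr k"
    using jb_pos by (simp add: powr_mult)
  also have "\<dots> \<le> jb (y - x) powr k * jb y powr s"
    using assms jb_ge1 jb_pos by (intro mult_left_mono powr_mono) auto
  finally show ?thesis .
next
  case False
  define m where "m = - k"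
  have m: "0 < m" "m \<le> s" using False assms by (auto simp: m_def)
  have "jb (y - x) \<le> jb y * jb (- x)" using jb_sub[of y "-x"] by simp
  also have "jb (- x) = jb x" by (simp add: jb_def)
  finally have "jb (y - x) powr m \<le> (jb y * jb x) powr m"
    using m jb_nn by (intro powr_mono2) auto
  also have "\<dots> = jb y powr m * jb x powr m"
    using jb_pos by (simp add: powr_mult)
  also have "\<dots> \<le> jb y powr s * jb x powr m"
    using m jb_ge1 jb_pos by (intro mult_right_mono powr_mono) auto
  finally have *: "jb (y - x) powr m \<le> jb y powr s * jb x powr m" .
  have "k = - m" by (simp add: m_def)
  then show ?thesis using * jb_pos[of x] jb_pos[of "y - x"]
    by (simp add: powr_minus field_simps)
qed


lemma transl:
  fixes f :: "real \<Rightarrow> ennreal"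
  assumes [measurable]: "f \<in> borel_measurable borel"
  shows "(\<integral>\<^sup>+x. f (c + x) \<partial>lborel) = (\<integral>\<^sup>+x. f x \<partial>lborel)"
  using nn_integral_real_affine[of f 1 c] by simp

lemma refl:
  fixes f :: "real \<Rightarrow> ennreal"
  assumes [measurable]: "f \<in> borel_measurable borel"
  shows "(\<integral>\<^sup>+x. f (c - x) \<partial>lborel) = (\<integral>\<^sup>+x. f x \<partial>lborel)"
  using nn_integral_real_affine[of f "-1" c] by simp

lemma scale2:
  fixes f :: "real \<Rightarrow> ennreal"
  assumes [measurable]: "f \<in> borel_measurable borel"
  shows "(\<integral>\<^sup>+x. f (x / 2 + c) \<partial>lborel) = 2 * (\<integral>\<^sup>+x. f x \<partial>lborel)"
proof -
  have "(\<integral>\<^sup>+x. f x \<partial>lborel) = ennreal (1/2) * (\<integral>\<^sup>+x. f (c + 1/2 * x) \<partial>lborel)"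
    using nn_integral_real_affine[of f "1/2" c] by simp
  also have "(\<lambda>x. f (c + 1/2 * x)) = (\<lambda>x. f (x / 2 + c))" by (simp add: add.commute)
  finally have "(\<integral>\<^sup>+x. f x \<partial>lborel) = ennreal (1/2) * (\<integral>\<^sup>+x. f (x / 2 + c) \<partial>lborel)" .
  then have "2 * (\<integral>\<^sup>+x. f x \<partial>lborel) = (2 * ennreal (1/2)) * (\<integral>\<^sup>+x. f (x / 2 + c) \<partial>lborel)"
    by (simp add: mult.assoc)
  also have "2 * ennreal (1/2) = 1"
    by (subst ennreal_numeral[symmetric], subst ennreal_mult[symmetric]) auto
  finally show ?thesis by simp
qed

definition Ip :: "real \<Rightarrow> ennreal" where
  "Ip p = (\<integral>\<^sup>+t. ennreal (jb t powr (-p)) \<partial>lborel)"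

lemma Ip_fin:
  assumes p: "1 < p"
  shows "Ip p < \<infinity>"
proof -
  define h where "h x = ennreal (x powr (-p)) * indicator {1..} x" for x :: real
  have hm[measurable]: "h \<in> borel_measurable borel" unfolding h_def by measurable
  have "((\<lambda>x. x powr (-p)) has_integral -(1 powr (-p+1)) / (-p+1)) {1..}"
    using p by (intro has_integral_powr_to_inf) auto
  then have hI: "(\<integral>\<^sup>+x. h x \<partial>lborel) = ennreal (-(1 powr (-p+1)) / (-p+1))"
    unfolding h_def by (intro nn_integral_has_integral_lebesgue') auto
  have pt: "ennreal (jb t powr (-p)) \<le> h (1 + t) + h (1 - t)" for t
  proof (cases "0 \<le> t")
    case True
    then have "h (1 + t) = ennreal (jb t powr (-p))" by (simp add: h_def jb_def)
    then show ?thesis by simp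
  next
    case False
    then have "h (1 - t) = ennreal (jb t powr (-p))" by (simp add: h_def jb_def)
    then show ?thesis by simp
  qed
  have "Ip p \<le> (\<integral>\<^sup>+t. h (1 + t) + h (1 - t) \<partial>lborel)"
    unfolding Ip_def by (intro nn_integral_mono pt)
  also have "\<dots> = (\<integral>\<^sup>+t. h (1 + t) \<partial>lborel) + (\<integral>\<^sup>+t. h (1 - t) \<partial>lborel)"
    by (intro nn_integral_add) auto
  also have "\<dots> = 2 * ennreal (-(1 powr (-p+1)) / (-p+1))"
    by (simp add: transl refl hI mult_2)
  also have "\<dots> < \<infinity>" by (simp add: ennreal_mult_less_top)
  finally show ?thesis .
qed


lemma jb_dec:
  assumes "\<bar>v\<bar> \<le> \<bar>u\<bar>" "0 \<le> p"
  shows "jb u powr (-p) \<le> jb v powr (-p)"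
  using assms by (intro powr_mono2') (auto simp: jb_def)

lemma jb_powr_le1: "0 \<le> p \<Longrightarrow> jb u powr (-p) \<le> 1"
  using powr_mono2'[of "-p" 1 "jb u"] jb_ge1[of u] by simp

lemma half_aux: "\<not> (c::real) / 2 \<le> a \<Longrightarrow> c \<le> a + b \<Longrightarrow> c / 2 \<le> b" by linarith

lemma tau_int:
  assumes p: "1 < p"
  shows "(\<integral>\<^sup>+t. ennreal (jb (t + \<alpha>) powr (-p) * jb (t + \<beta>) powr (-p)) \<partial>lborel)
          \<le> ennreal (jb ((\<alpha> - \<beta>) / 2) powr (-p)) * (2 * Ip p)"
proof -
  define c where "c = jb ((\<alpha> - \<beta>) / 2) powr (-p)"
  have c0: "0 \<le> c" by (simp add: c_def)
  have pt: "jb (t + \<alpha>) powr (-p) * jb (t + \<beta>) powr (-p)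
            \<le> c * (jb (t + \<alpha>) powr (-p) + jb (t + \<beta>) powr (-p))" for t
  proof (cases "\<bar>\<alpha> - \<beta>\<bar> / 2 \<le> \<bar>t + \<alpha>\<bar>")
    case True
    then have "jb (t + \<alpha>) powr (-p) \<le> c" unfolding c_def using p
      by (intro jb_dec) auto
    then have "jb (t + \<alpha>) powr (-p) * jb (t + \<beta>) powr (-p) \<le> c * jb (t + \<beta>) powr (-p)"
      by (intro mult_right_mono) auto
    also have "\<dots> \<le> c * (jb (t + \<alpha>) powr (-p) + jb (t + \<beta>) powr (-p))"
      using c0 by (intro mult_left_mono) auto
    finally show ?thesis .
  next
    case False
    have "\<bar>\<alpha> - \<beta>\<bar> \<le> \<bar>t + \<alpha>\<bar> + \<bar>t + \<beta>\<bar>"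
      using abs_triangle_ineq4[of "t + \<alpha>" "t + \<beta>"] by simp
    with False have "\<bar>\<alpha> - \<beta>\<bar> / 2 \<le> \<bar>t + \<beta>\<bar>" by (rule half_aux)
    then have "jb (t + \<beta>) powr (-p) \<le> c" unfolding c_def using p
      by (intro jb_dec) auto
    then have "jb (t + \<alpha>) powr (-p) * jb (t + \<beta>) powr (-p) \<le> jb (t + \<alpha>) powr (-p) * c"
      by (intro mult_left_mono) auto
    also have "\<dots> \<le> c * (jb (t + \<alpha>) powr (-p) + jb (t + \<beta>) powr (-p))"
      using c0 by (simp add: mult.commute mult_left_mono)
    finally show ?thesis .
  qed
  have "(\<integral>\<^sup>+t. ennreal (jb (t + \<alpha>) powr (-p) * jb (t + \<beta>) powr (-p)) \<partial>lborel)
     \<le> (\<integral>\<^sup>+t. ennreal c * (ennreal (jb (\<alpha> + t) powr (-p)) + ennreal (jb (\<beta> + t) powr (-p))) \<partial>lborel)"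
    using pt c0 by (intro nn_integral_mono) (simp add: ennreal_mult'[symmetric] ennreal_plus[symmetric] add.commute del: ennreal_plus)
  also have "\<dots> = ennreal c * ((\<integral>\<^sup>+t. ennreal (jb (\<alpha> + t) powr (-p)) \<partial>lborel) + (\<integral>\<^sup>+t. ennreal (jb (\<beta> + t) powr (-p)) \<partial>lborel))"
    by (simp add: nn_integral_cmult nn_integral_add)
  also have "\<dots> = ennreal c * (2 * Ip p)"
    using transl[of "\<lambda>t. ennreal (jb t powr (-p))" \<alpha>] transl[of "\<lambda>t. ennreal (jb t powr (-p))" \<beta>]
    by (simp add: Ip_def mult_2)
  finally show ?thesis unfolding c_def .
qed

lemma quad_lb:
  fixes x \<mu> :: real
  defines "r \<equiv> sqrt (max \<mu> 0)"
  shows "(\<bar>x\<bar> / 2 - r)^2 \<le> \<bar>x^2 / 4 - \<mu>\<bar>"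
proof -
  define a where "a = \<bar>x\<bar> / 2"
  have a: "0 \<le> a" "x^2/4 = a^2" by (auto simp: a_def power_divide)
  have r: "0 \<le> r" by (simp add: r_def)
  show ?thesis
  proof (cases "0 \<le> \<mu>")
    case True
    then have "r^2 = \<mu>" by (simp add: r_def)
    then have "x^2 / 4 - \<mu> = (a - r) * (a + r)"
      using a by (simp add: power2_eq_square algebra_simps)
    then have "\<bar>x^2 / 4 - \<mu>\<bar> = \<bar>a - r\<bar> * (a + r)"
      using a r by (simp add: abs_mult)
    also have "\<dots> \<ge> \<bar>a - r\<bar> * \<bar>a - r\<bar>"
      using a r by (intro mult_left_mono) auto
    finally show ?thesis by (simp add: a_def power2_eq_square)
  next
    case False
    then have "r = 0" by (simp add: r_def)
    then show ?thesis using False a by (simp add: a_def)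
  qed
qed

lemma xi_int:
  assumes p: "1 < p"
  shows "(\<integral>\<^sup>+x. ennreal (jb (x^2 / 4 - \<mu>) powr (-p)) \<partial>lborel) \<le> ennreal (2 powr p) * (4 * Ip p)"
proof -
  define r where "r = sqrt (max \<mu> 0)"
  have pt: "jb (x^2 / 4 - \<mu>) powr (-p) \<le> 2 powr p * (jb (x / 2 + (- r)) powr (-p) + jb (x / 2 + r) powr (-p))" for x
  proof -
    define y where "y = \<bar>x\<bar> / 2 - r"
    have "y^2 \<le> \<bar>x^2 / 4 - \<mu>\<bar>" using quad_lb[of x \<mu>] by (simp add: y_def r_def)
    moreover have "1 + \<bar>y\<bar> \<le> 2 * (1 + y^2)"
    proof -
      have "0 \<le> (\<bar>y\<bar> - 1)^2" by simp
      also have "(\<bar>y\<bar> - 1)^2 = y^2 - 2 * \<bar>y\<bar> + 1"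
        by (simp add: power2_eq_square algebra_simps)
      finally show ?thesis using zero_le_power2[of y] by (smt (verit))
    qed
    ultimately have "jb y / 2 \<le> jb (x^2 / 4 - \<mu>)" by (simp add: jb_def)
    then have "jb (x^2 / 4 - \<mu>) powr (-p) \<le> (jb y / 2) powr (-p)"
      using p jb_pos[of y] by (intro powr_mono2') auto
    also have "\<dots> = 2 powr p * jb y powr (-p)"
      using jb_pos[of y] by (simp add: powr_divide powr_minus divide_simps)
    also have "jb y = jb (x / 2 + (- r)) \<or> jb y = jb (x / 2 + r)"
      by (cases "0 \<le> x") (auto simp: y_def jb_def abs_minus_commute)
    then have "2 powr p * jb y powr (-p) \<le> 2 powr p * (jb (x / 2 + (- r)) powr (-p) + jb (x / 2 + r) powr (-p))"
      by (intro mult_left_mono) auto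
    finally show ?thesis .
  qed
  have "(\<integral>\<^sup>+x. ennreal (jb (x^2 / 4 - \<mu>) powr (-p)) \<partial>lborel)
    \<le> (\<integral>\<^sup>+x. ennreal (2 powr p) * (ennreal (jb (x / 2 + (- r)) powr (-p)) + ennreal (jb (x / 2 + r) powr (-p))) \<partial>lborel)"
    using pt by (intro nn_integral_mono) (simp add: ennreal_mult'[symmetric] ennreal_plus[symmetric] del: ennreal_plus)
  also have "\<dots> = ennreal (2 powr p) * ((\<integral>\<^sup>+x. ennreal (jb (x / 2 + (- r)) powr (-p)) \<partial>lborel) + (\<integral>\<^sup>+x. ennreal (jb (x / 2 + r) powr (-p)) \<partial>lborel))"
    by (simp add: nn_integral_cmult nn_integral_add)
  also have "\<dots> = ennreal (2 powr p) * (4 * Ip p)"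
    using scale2[of "\<lambda>t. ennreal (jb t powr (-p))" "-r"] scale2[of "\<lambda>t. ennreal (jb t powr (-p))" r]
    by (simp add: Ip_def distrib_right[symmetric])
  finally show ?thesis .
qed


lemma K_bound:
  assumes p: "1 < p"
  shows "(\<integral>\<^sup>+w. ennreal (jb (snd w - \<tau> + (fst w - \<xi>)^2) powr (-p) * jb (snd w + 1/2 * (fst w)^2) powr (-p)) \<partial>lborel)
          \<le> ennreal (2 powr p) * (4 * Ip p) * (2 * Ip p)"
proof -
  define f where "f w = ennreal (jb (snd w - \<tau> + (fst w - \<xi>)^2) powr (-p) * jb (snd w + 1/2 * (fst w)^2) powr (-p))" for w :: "real \<times> real"
  have fm[measurable]: "f \<in> borel_measurable (lborel \<Otimes>\<^sub>M lborel)" unfolding f_def by measurable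
  define \<mu> where "\<mu> = (\<tau> + \<xi>^2) / 2"
  have "(\<integral>\<^sup>+w. f w \<partial>lborel) = (\<integral>\<^sup>+w. f w \<partial>(lborel \<Otimes>\<^sub>M lborel))"
    by (simp add: lborel_prod)
  also have "\<dots> = (\<integral>\<^sup>+x. \<integral>\<^sup>+t. f (x, t) \<partial>lborel \<partial>lborel)"
    by (rule lborel.nn_integral_fst[symmetric]) simp
  also have "\<dots> \<le> (\<integral>\<^sup>+x. ennreal (jb ((-2 * \<xi> + x)^2 / 4 - \<mu>) powr (-p)) * (2 * Ip p) \<partial>lborel)"
  proof (intro nn_integral_mono)
    fix x
    have "(\<integral>\<^sup>+t. f (x, t) \<partial>lborel) = (\<integral>\<^sup>+t. ennreal (jb (t + (- \<tau> + (x - \<xi>)^2)) powr (-p) * jb (t + 1/2 * x^2) powr (-p)) \<partial>lborel)"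
      unfolding f_def by (simp add: algebra_simps)
    also have "\<dots> \<le> ennreal (jb (((- \<tau> + (x - \<xi>)^2) - 1/2 * x^2) / 2) powr (-p)) * (2 * Ip p)"
      by (rule tau_int[OF p])
    also have "((- \<tau> + (x - \<xi>)^2) - 1/2 * x^2) / 2 = (-2 * \<xi> + x)^2 / 4 - \<mu>"
      by (simp add: \<mu>_def power2_eq_square field_simps)
    finally show "(\<integral>\<^sup>+t. f (x, t) \<partial>lborel) \<le> ennreal (jb ((-2 * \<xi> + x)^2 / 4 - \<mu>) powr (-p)) * (2 * Ip p)" .
  qed
  also have "\<dots> = (\<integral>\<^sup>+x. ennreal (jb ((-2 * \<xi> + x)^2 / 4 - \<mu>) powr (-p)) \<partial>lborel) * (2 * Ip p)"
    by (simp add: nn_integral_multc)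
  also have "(\<integral>\<^sup>+x. ennreal (jb ((-2 * \<xi> + x)^2 / 4 - \<mu>) powr (-p)) \<partial>lborel) = (\<integral>\<^sup>+x. ennreal (jb (x^2 / 4 - \<mu>) powr (-p)) \<partial>lborel)"
    by (rule transl[of "\<lambda>x. ennreal (jb (x^2 / 4 - \<mu>) powr (-p))"]) measurable
  also have "\<dots> \<le> ennreal (2 powr p) * (4 * Ip p)"
    by (rule xi_int[OF p])
  finally show ?thesis unfolding f_def by (simp add: mult_right_mono)
qed


lemma wmeas:
  fixes F :: "real \<times> real \<Rightarrow> complex"
  assumes "F \<in> borel_measurable borel"
  shows "(\<lambda>y. jb (fst y) powr k * jb (snd y + a * (fst y)^2) powr b * cmod (F y)) \<in> borel_measurable borel"
proof -
  have [measurable]: "F \<in> borel_measurable (borel \<Otimes>\<^sub>M borel)" using assms by (simp add: borel_prod)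
  have "(\<lambda>y. jb (fst y) powr k * jb (snd y + a * (fst y)^2) powr b * cmod (F y)) \<in> borel_measurable (borel \<Otimes>\<^sub>M borel)"
    by measurable
  then show ?thesis by (simp add: borel_prod)
qed

lemma kmeas:
  shows "(\<lambda>w. jb (snd w + a * (fst w)^2) powr b) \<in> borel_measurable (borel :: (real \<times> real) measure)"
proof -
  have "(\<lambda>w. jb (snd w + a * (fst w)^2) powr b) \<in> borel_measurable (borel \<Otimes>\<^sub>M borel :: (real \<times> real) measure)"
    by measurable
  then show ?thesis by (simp add: borel_prod)
qed

lemma transl2:
  fixes h :: "real \<times> real \<Rightarrow> ennreal"
  assumes [measurable]: "h \<in> borel_measurable borel"
  shows "(\<integral>\<^sup>+w. h w \<partial>lborel) = (\<integral>\<^sup>+y. h (z + y) \<partial>lborel)"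
proof -
  have "(\<integral>\<^sup>+w. h w \<partial>lborel) = (\<integral>\<^sup>+w. h w \<partial>(distr lborel borel ((+) z)))"
    by (simp add: lborel_distr_plus)
  also have "\<dots> = (\<integral>\<^sup>+y. h (z + y) \<partial>lborel)"
    by (rule nn_integral_distr) auto
  finally show ?thesis .
qed

lemma norm_bound:
  fixes f :: "real \<times> real \<Rightarrow> complex"
  shows "ennreal (cmod (\<integral>w. f w \<partial>lborel)) \<le> (\<integral>\<^sup>+w. ennreal (cmod (f w)) \<partial>lborel)"
proof (cases "integrable lborel f")
  case True
  then show ?thesis by (rule integral_norm_bound_ennreal)
next
  case False
  then show ?thesis by (simp add: not_integrable_integral_eq)
qed


lemma jb_inv: "jb x powr (-b) * jb x powr b = 1"
proof -
  have "jb x powr b > 0" using jb_pos[of x] by simp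
  then show ?thesis by (simp add: powr_minus)
qed

theorem proposition3p5:
  fixes b d \<kappa> s :: real
  assumes "1/2 < b" "b < 3/4" "1/4 < d" "d < 1/2" "\<bar>\<kappa>\<bar> \<le> s"
  shows "\<exists>C>0. \<forall>F G.
           F \<in> borel_measurable lborel \<longrightarrow> G \<in> borel_measurable lborel \<longrightarrow>
           Xsq \<kappa> b 1 F < \<infinity> \<longrightarrow> Xsq s b (1/2) G < \<infinity> \<longrightarrow>
           Xsq \<kappa> (-d) 1 (conj_prod_hat F G)
             \<le> ennreal (C^2) * Xsq \<kappa> b 1 F * Xsq s b (1/2) G"
proof -
  define p where "p = 2 * b"
  have p: "1 < p" using assms by (simp add: p_def)
  define K where "K = ennreal (2 powr p) * (4 * Ip p) * (2 * Ip p)"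
  have Kfin: "K < \<infinity>" using Ip_fin[OF p] by (simp add: K_def ennreal_mult_less_top)
  define C where "C = sqrt (enn2real K + 1)"
  have C: "C > 0" unfolding C_def by (simp add: add_nonneg_pos)
  have KC: "K \<le> ennreal (C^2)"
  proof -
    have "C^2 = enn2real K + 1" unfolding C_def by simp
    then have "ennreal (C^2) \<ge> ennreal (enn2real K)" by (simp add: ennreal_leI)
    moreover have "ennreal (enn2real K) = K" using Kfin by simp
    ultimately show ?thesis by simp
  qed
  show ?thesis
  proof (intro exI[of _ C] conjI allI impI C)
    fix F G :: "real \<times> real \<Rightarrow> complex"
    assume Fm': "F \<in> borel_measurable lborel" and Gm': "G \<in> borel_measurable lborel"
    have Fm[measurable]: "F \<in> borel_measurable borel" using Fm' by simp
    have Gm[measurable]: "G \<in> borel_measurable borel" using Gm' by simp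
    define Ft where "Ft y = jb (fst y) powr \<kappa> * jb (snd y + 1 * (fst y)^2) powr b * cmod (F y)" for y :: "real \<times> real"
    define Gt where "Gt w = jb (fst w) powr s * jb (snd w + 1/2 * (fst w)^2) powr b * cmod (G w)" for w :: "real \<times> real"
    have Ftm[measurable]: "Ft \<in> borel_measurable borel"
      using wmeas[OF Fm, of \<kappa> 1 b] unfolding Ft_def[abs_def] .
    have Gtm[measurable]: "Gt \<in> borel_measurable borel"
      using wmeas[OF Gm, of s "1/2" b] unfolding Gt_def[abs_def] .
    have Ft0: "0 \<le> Ft y" for y by (simp add: Ft_def)
    have Gt0: "0 \<le> Gt y" for y by (simp add: Gt_def)
    define g1 where "g1 w = jb (snd w + 1 * (fst w)^2) powr (-b)" for w :: "real \<times> real"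
    define g2 where "g2 w = jb (snd w + 1/2 * (fst w)^2) powr (-b)" for w :: "real \<times> real"
    have g1m[measurable]: "g1 \<in> borel_measurable borel"
      using kmeas[of 1 "-b"] unfolding g1_def[abs_def] .
    have g2m[measurable]: "g2 \<in> borel_measurable borel"
      using kmeas[of "1/2" "-b"] unfolding g2_def[abs_def] .
    define k where "k z w = g1 (w - z) * g2 w" for z w :: "real \<times> real"
    have k0: "0 \<le> k z w" for z w by (simp add: k_def g1_def g2_def)
    define XF where "XF = (\<integral>\<^sup>+y. ennreal ((Ft y)^2) \<partial>lborel)"
    define XG where "XG = (\<integral>\<^sup>+y. ennreal ((Gt y)^2) \<partial>lborel)"
    have XFe: "Xsq \<kappa> b 1 F = XF" by (simp add: Xsq_def XF_def Ft_def)
    have XGe: "Xsq s b (1/2) G = XG" by (simp add: Xsq_def XG_def Gt_def)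
    have step: "ennreal ((jb (fst z) powr \<kappa> * jb (snd z + 1 * (fst z)^2) powr (-d) * cmod (conj_prod_hat F G z))^2)
        \<le> K * (\<integral>\<^sup>+y. ennreal ((Ft y)^2 * (Gt (z + y))^2) \<partial>lborel)" for z
    proof -
      define W where "W = jb (fst z) powr \<kappa> * jb (snd z + 1 * (fst z)^2) powr (-d)"
      have W0: "0 \<le> W" by (simp add: W_def)
      have pw: "W * (cmod (F (w - z)) * cmod (G w)) \<le> k z w * (Ft (w - z) * Gt w)" for w
      proof -
        have "W \<le> jb (fst z) powr \<kappa> * 1" unfolding W_def
          using assms by (intro mult_left_mono jb_powr_le1) auto
        also have "\<dots> \<le> jb (fst w - fst z) powr \<kappa> * jb (fst w) powr s"
          using weight[OF assms(5)] by simp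
        finally have Wle: "W \<le> jb (fst w - fst z) powr \<kappa> * jb (fst w) powr s" .
        have e1: "g1 (w - z) * jb (snd (w - z) + 1 * (fst (w - z))^2) powr b = 1"
          unfolding g1_def by (rule jb_inv)
        have e2: "g2 w * jb (snd w + 1/2 * (fst w)^2) powr b = 1"
          unfolding g2_def by (rule jb_inv)
        have "k z w * (Ft (w - z) * Gt w) = (g1 (w - z) * jb (snd (w - z) + 1 * (fst (w - z))^2) powr b)
              * (g2 w * jb (snd w + 1/2 * (fst w)^2) powr b)
              * (jb (fst (w - z)) powr \<kappa> * jb (fst w) powr s) * (cmod (F (w - z)) * cmod (G w))"
          unfolding k_def Ft_def Gt_def by (simp only: mult_ac)
        also have "\<dots> = (jb (fst w - fst z) powr \<kappa> * jb (fst w) powr s) * (cmod (F (w - z)) * cmod (G w))"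
          unfolding e1 e2 by simp
        finally show ?thesis using Wle by (simp add: mult_right_mono)
      qed
      have "ennreal (W * cmod (conj_prod_hat F G z)) = ennreal W * ennreal (cmod (conj_prod_hat F G z))"
        using W0 by (simp add: ennreal_mult)
      also have "\<dots> \<le> ennreal W * (\<integral>\<^sup>+w. ennreal (cmod (cnj (F (w - z)) * G w)) \<partial>lborel)"
        unfolding conj_prod_hat_def by (intro mult_left_mono norm_bound) auto
      also have "\<dots> = ennreal W * (\<integral>\<^sup>+w. ennreal (cmod (F (w - z)) * cmod (G w)) \<partial>lborel)"
        by (simp add: norm_mult)
      also have "\<dots> = (\<integral>\<^sup>+w. ennreal W * ennreal (cmod (F (w - z)) * cmod (G w)) \<partial>lborel)"
        by (rule nn_integral_cmult[symmetric]) measurable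
      also have "\<dots> = (\<integral>\<^sup>+w. ennreal (W * (cmod (F (w - z)) * cmod (G w))) \<partial>lborel)"
        using W0 by (simp add: ennreal_mult)
      also have "\<dots> \<le> (\<integral>\<^sup>+w. ennreal (k z w) * ennreal (Ft (w - z) * Gt w) \<partial>lborel)"
      proof (intro nn_integral_mono)
        fix w
        have "ennreal (W * (cmod (F (w - z)) * cmod (G w))) \<le> ennreal (k z w * (Ft (w - z) * Gt w))"
          by (rule ennreal_leI[OF pw])
        also have "\<dots> = ennreal (k z w) * ennreal (Ft (w - z) * Gt w)"
          using k0[of z w] Ft0[of "w - z"] Gt0[of w] by (simp add: ennreal_mult)
        finally show "ennreal (W * (cmod (F (w - z)) * cmod (G w))) \<le> ennreal (k z w) * ennreal (Ft (w - z) * Gt w)" .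
      qed
      finally have A: "ennreal (W * cmod (conj_prod_hat F G z)) \<le> (\<integral>\<^sup>+w. ennreal (k z w) * ennreal (Ft (w - z) * Gt w) \<partial>lborel)" .
      have "ennreal ((W * cmod (conj_prod_hat F G z))^2) = (ennreal (W * cmod (conj_prod_hat F G z)))^2"
        using W0 by (simp add: ennreal_power)
      also have "\<dots> \<le> (\<integral>\<^sup>+w. ennreal (k z w) * ennreal (Ft (w - z) * Gt w) \<partial>lborel)^2"
        using A by (intro power_mono) auto
      also have "\<dots> \<le> (\<integral>\<^sup>+w. (ennreal (k z w))^2 \<partial>lborel) * (\<integral>\<^sup>+w. (ennreal (Ft (w - z) * Gt w))^2 \<partial>lborel)"
        by (rule Cauchy_Schwarz_nn_integral) (simp_all add: k_def)
      also have "(\<integral>\<^sup>+w. (ennreal (k z w))^2 \<partial>lborel) \<le> K"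
      proof -
        have "(\<integral>\<^sup>+w. (ennreal (k z w))^2 \<partial>lborel) = (\<integral>\<^sup>+w. ennreal (jb (snd w - snd z + (fst w - fst z)^2) powr (-p) * jb (snd w + 1/2 * (fst w)^2) powr (-p)) \<partial>lborel)"
        proof (intro nn_integral_cong)
          fix w :: "real \<times> real"
          have sq: "(x powr (-b))^2 = x powr (-p)" if "0 < x" for x :: real
            using that by (simp add: p_def power2_eq_square powr_add[symmetric])
          show "(ennreal (k z w))^2 = ennreal (jb (snd w - snd z + (fst w - fst z)^2) powr (-p) * jb (snd w + 1/2 * (fst w)^2) powr (-p))"
            using k0[of z w] jb_pos
            by (simp add: ennreal_power k_def g1_def g2_def power_mult_distrib sq)
        qed
        also have "\<dots> \<le> K" unfolding K_def by (rule K_bound[OF p])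
        finally show ?thesis .
      qed
      also have "(\<integral>\<^sup>+w. (ennreal (Ft (w - z) * Gt w))^2 \<partial>lborel) = (\<integral>\<^sup>+y. ennreal ((Ft y)^2 * (Gt (z + y))^2) \<partial>lborel)"
      proof -
        have "(\<integral>\<^sup>+w. (ennreal (Ft (w - z) * Gt w))^2 \<partial>lborel) = (\<integral>\<^sup>+y. (ennreal (Ft (z + y - z) * Gt (z + y)))^2 \<partial>lborel)"
          by (rule transl2) measurable
        also have "\<dots> = (\<integral>\<^sup>+y. ennreal ((Ft y)^2 * (Gt (z + y))^2) \<partial>lborel)"
          using Ft0 Gt0 by (simp add: ennreal_power power_mult_distrib)
        finally show ?thesis .
      qed
      finally show ?thesis
        by (simp add: W_def mult_right_mono)
    qed
    have "Xsq \<kappa> (-d) 1 (conj_prod_hat F G)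
        = (\<integral>\<^sup>+z. ennreal ((jb (fst z) powr \<kappa> * jb (snd z + 1 * (fst z)^2) powr (-d) * cmod (conj_prod_hat F G z))^2) \<partial>lborel)"
      by (simp add: Xsq_def)
    also have "\<dots> \<le> (\<integral>\<^sup>+z. K * (\<integral>\<^sup>+y. ennreal ((Ft y)^2 * (Gt (z + y))^2) \<partial>lborel) \<partial>lborel)"
      by (intro nn_integral_mono step)
    also have "\<dots> = (\<integral>\<^sup>+z. (\<integral>\<^sup>+y. K * ennreal ((Ft y)^2 * (Gt (z + y))^2) \<partial>lborel) \<partial>lborel)"
      by (intro nn_integral_cong nn_integral_cmult[symmetric]) measurable
    also have "\<dots> = (\<integral>\<^sup>+y. (\<integral>\<^sup>+z. K * ennreal ((Ft y)^2 * (Gt (z + y))^2) \<partial>lborel) \<partial>lborel)"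
      by (rule lborel_pair.Fubini'[symmetric]) measurable
    also have "\<dots> = (\<integral>\<^sup>+y. (K * ennreal ((Ft y)^2)) * XG \<partial>lborel)"
    proof (intro nn_integral_cong)
      fix y :: "real \<times> real"
      have "(\<integral>\<^sup>+z. K * ennreal ((Ft y)^2 * (Gt (z + y))^2) \<partial>lborel) = (\<integral>\<^sup>+z. (K * ennreal ((Ft y)^2)) * ennreal ((Gt (y + z))^2) \<partial>lborel)"
        using Ft0 Gt0 by (intro nn_integral_cong) (simp add: ennreal_mult add.commute mult.assoc)
      also have "\<dots> = (K * ennreal ((Ft y)^2)) * (\<integral>\<^sup>+z. ennreal ((Gt (y + z))^2) \<partial>lborel)"
        by (rule nn_integral_cmult) measurable
      also have "(\<integral>\<^sup>+z. ennreal ((Gt (y + z))^2) \<partial>lborel) = XG"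
        unfolding XG_def by (rule transl2[symmetric]) measurable
      finally show "(\<integral>\<^sup>+z. K * ennreal ((Ft y)^2 * (Gt (z + y))^2) \<partial>lborel) = (K * ennreal ((Ft y)^2)) * XG" .
    qed
    also have "\<dots> = K * XF * XG"
      unfolding XF_def by (simp add: nn_integral_multc nn_integral_cmult)
    also have "\<dots> \<le> ennreal (C^2) * XF * XG"
      using KC by (intro mult_right_mono) auto
    finally show "Xsq \<kappa> (-d) 1 (conj_prod_hat F G) \<le> ennreal (C^2) * Xsq \<kappa> b 1 F * Xsq s b (1/2) G"
      by (simp add: XFe XGe)
  qed
qed

end
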